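(* Let $V\in L^1(\mathbb{R})$ (so $\widehat V\in L^\infty$), $s\ge1$, $N>1$. On $\Gamma_4=\{(\xi_1,\dots,\xi_4)\in\mathbb{R}^4:\xi_1+\xi_2+\xi_3+\xi_4=0\}$ define $$\Psi:=c\,\frac{\big((\theta(\xi_1))^2-(\theta(\xi_2))^2+(\theta(\xi_3))^2-(\theta(\xi_4))^2\big)\widehat V(\xi_3+\xi_4)}{\xi_1^2-\xi_2^2+\xi_3^2-\xi_4^2}$$ when the denominator is nonzero and $\Psi:=0$ otherwise, where $c$ is a fixed real constant. Suppose $|\xi_j|\sim N_j$ for dyadic integers $N_j\ge1$, $j=1,\dots,4$, and let $N_1^*\ge N_2^*\ge N_3^*\ge N_4^*$ be the decreasing rearrangement of $N_1,\dots,N_4$. Then, with implicit constants independent of $N$: (i) if $N_2^*\gg N_3^*$, then $|\Psi|\lesssim\frac{1}{(N_1^* )^2}\theta(N_1^* )\theta(N_2^* )$; (ii) if $N_2^*\sim N_3^*$, then $|\Psi|\lesssim\frac{1}{(N_1^* )^3}\theta(N_1^* )\theta(N_2^* )N_3^*N_4^*$.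
   Context: $\theta(\xi)=\theta_0(\xi/N)$, where $\theta_0$ is a fixed even smooth function, non-decreasing on $[0,\infty)$, with $\theta_0(\xi)=|\xi|^s$ for $|\xi|\ge2$ and $\theta_0(\xi)=1$ for $|\xi|\le1$. Dyadic localization $|\xi_j|\sim N_j$ means $N_j/2\le|\xi_j|\le2N_j$ (with $|\xi_j|\lesssim1$ when $N_j=1$). On $\Gamma_4$ necessarily $N_1^*\sim N_2^*$. *)

theory Defs
  imports "HOL-Analysis.Analysis"
begin

definition smooth_fun :: "(real \<Rightarrow> real) \<Rightarrow> bool" where
  "smooth_fun f \<longleftrightarrow> (\<forall>k x. ((deriv ^^ k) f) differentiable (at x))"

text \<open>Fourier transform of an L1 function (normalisation constant absorbed into c).\<close>
definition fourier :: "(real \<Rightarrow> complex) \<Rightarrow> real \<Rightarrow> complex" where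
  "fourier V \<xi> = (LINT x|lborel. V x * cis (- (\<xi> * x)))"

definition theta :: "(real \<Rightarrow> real) \<Rightarrow> real \<Rightarrow> real \<Rightarrow> real" where
  "theta \<theta>0 N \<xi> = \<theta>0 (\<xi> / N)"

definition Psi :: "real \<Rightarrow> (real \<Rightarrow> complex) \<Rightarrow> (real \<Rightarrow> real)
    \<Rightarrow> real \<Rightarrow> real \<Rightarrow> real \<Rightarrow> real \<Rightarrow> complex" where
  "Psi c V \<theta> \<xi>1 \<xi>2 \<xi>3 \<xi>4 =
     (let D = \<xi>1^2 - \<xi>2^2 + \<xi>3^2 - \<xi>4^2 in
      if D = 0 then 0
      else complex_of_real c
           * complex_of_real ((\<theta> \<xi>1)^2 - (\<theta> \<xi>2)^2 + (\<theta> \<xi>3)^2 - (\<theta> \<xi>4)^2)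
           * fourier V (\<xi>3 + \<xi>4) / complex_of_real D)"

definition dyloc :: "real \<Rightarrow> real \<Rightarrow> bool" where
  "dyloc \<xi> M \<longleftrightarrow> (if M = 1 then \<bar>\<xi>\<bar> \<le> 2 else M / 2 \<le> \<bar>\<xi>\<bar> \<and> \<bar>\<xi>\<bar> \<le> 2 * M)"

text \<open>Decreasing rearrangement: entry i (0-based) is N_{i+1}^*.\<close>
definition dec_rearr :: "real list \<Rightarrow> real list" where
  "dec_rearr xs = rev (sort xs)"

end

theory Submission
  imports Defs
begin

lemma smooth_derivs:
  assumes "\<forall>k x. ((deriv ^^ k) f) differentiable (at x)"
  shows "\<And>x. (f has_real_derivative deriv f x) (at x)"
    "\<And>x. (deriv f has_real_derivative deriv (deriv f) x) (at x)"
    "\<And>x. isCont (deriv (deriv f)) x"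
proof -
  fix x
  have "((deriv ^^ 0) f) differentiable (at x)" using assms by blast
  then show "(f has_real_derivative deriv f x) (at x)"
    by (simp add: DERIV_deriv_iff_real_differentiable)
  have "((deriv ^^ 1) f) differentiable (at x)" using assms by blast
  then show "(deriv f has_real_derivative deriv (deriv f) x) (at x)"
    by (simp add: DERIV_deriv_iff_real_differentiable)
  have "((deriv ^^ 2) f) differentiable (at x)" using assms by blast
  then have "deriv (deriv f) differentiable (at x)" by (simp add: numeral_2_eq_2)
  then show "isCont (deriv (deriv f)) x"
    using differentiable_imp_continuous_within by blast
qed

lemma mvt_sym:
  fixes f :: "real \<Rightarrow> real"
  assumes "\<And>x. (f has_real_derivative f' x) (at x)"
  shows "\<exists>z. min a b \<le> z \<and> z \<le> max a b \<and> f b - f a = (b - a) * f' z"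
proof (cases a b rule: linorder_cases)
  case less
  then obtain z where "a < z" "z < b" "f b - f a = (b - a) * f' z"
    using MVT2[of a b f f'] assms by blast
  then show ?thesis by (intro exI[of _ z]) auto
next
  case equal then show ?thesis by (intro exI[of _ a]) auto
next
  case greater
  then obtain z where "b < z" "z < a" "f a - f b = (a - b) * f' z"
    using MVT2[of b a f f'] assms by blast
  then show ?thesis by (intro exI[of _ z]) (auto simp: algebra_simps)
qed

lemma pos_large_deriv:
  fixes F F1 F2 :: "real \<Rightarrow> real"
  assumes d1: "\<And>x. (F has_real_derivative F1 x) (at x)"
    and d2: "\<And>x. (F1 has_real_derivative F2 x) (at x)"
    and eq: "\<And>x. x > 2 \<Longrightarrow> F x = x powr a"
    and y: "y > 2"
  shows "F2 y = a * (a - 1) * y powr (a - 2)"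
proof -
  have "\<And>x. x > 2 \<Longrightarrow> F1 x = a * x powr (a - 1)"
  proof -
    fix x :: real assume x: "x > 2"
    have "((\<lambda>x. x powr a) has_real_derivative a * x powr (a - 1)) (at x)"
      using DERIV_fun_powr[OF DERIV_ident, of x a] x by simp
    then have "(F has_real_derivative a * x powr (a - 1)) (at x)"
      by (rule has_field_derivative_transform_within_open[where S="{2<..}"]) (use x eq in auto)
    then show "F1 x = a * x powr (a - 1)" using d1 DERIV_unique by blast
  qed
  then have h: "\<And>x. x \<in> {2<..} \<Longrightarrow> a * x powr (a - 1) = F1 x" by auto
  have "((\<lambda>x. a * x powr (a - 1)) has_real_derivative a * ((a - 1) * y powr (a - 1 - real 1) * 1)) (at y)"
    using y by (intro DERIV_cmult DERIV_fun_powr) (auto intro: derivative_eq_intros)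
  then have "(F1 has_real_derivative a * ((a - 1) * y powr (a - 1 - real 1) * 1)) (at y)"
    by (rule has_field_derivative_transform_within_open[where S="{2<..}"]) (use y h in auto)
  then have "F2 y = a * ((a - 1) * y powr (a - 1 - real 1) * 1)" using d2 DERIV_unique by blast
  then show ?thesis by (simp add: algebra_simps)
qed

lemma neg_large_deriv:
  fixes F F1 F2 :: "real \<Rightarrow> real"
  assumes d1: "\<And>x. (F has_real_derivative F1 x) (at x)"
    and d2: "\<And>x. (F1 has_real_derivative F2 x) (at x)"
    and eq: "\<And>x. x < -2 \<Longrightarrow> F x = (-x) powr a"
    and y: "y < -2"
  shows "F2 y = a * (a - 1) * (-y) powr (a - 2)"
proof -
  have "\<And>x. x < -2 \<Longrightarrow> F1 x = a * (-x) powr (a - 1) * (-1)"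
  proof -
    fix x :: real assume x: "x < -2"
    have "((\<lambda>x. (-x) powr a) has_real_derivative a * (-x) powr (a - 1) * (-1)) (at x)"
      using DERIV_fun_powr[OF DERIV_minus[OF DERIV_ident], of x a] x by simp
    then have "(F has_real_derivative a * (-x) powr (a - 1) * (-1)) (at x)"
      by (rule has_field_derivative_transform_within_open[where S="{..<-2}"]) (use x eq in auto)
    then show "F1 x = a * (-x) powr (a - 1) * (-1)" using d1 DERIV_unique by blast
  qed
  then have h: "\<And>x. x \<in> {..<-2} \<Longrightarrow> -a * (-x) powr (a - 1) = F1 x" by auto
  have "((\<lambda>x. -a * (-x) powr (a - 1)) has_real_derivative -a * ((a - 1) * (-y) powr (a - 1 - real 1) * (-1))) (at y)"
    using y by (intro DERIV_cmult DERIV_fun_powr) (auto intro: derivative_eq_intros)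
  then have "(F1 has_real_derivative -a * ((a - 1) * (-y) powr (a - 1 - real 1) * (-1))) (at y)"
    by (rule has_field_derivative_transform_within_open[where S="{..<-2}"]) (use y h in auto)
  then have "F2 y = -a * ((a - 1) * (-y) powr (a - 1 - real 1) * (-1))" using d2 DERIV_unique by blast
  then show ?thesis by (simp add: algebra_simps)
qed

lemma num_bound:
  fixes F F1 F2 :: "real \<Rightarrow> real"
  assumes d1: "\<And>x. (F has_real_derivative F1 x) (at x)"
    and d2: "\<And>x. (F1 has_real_derivative F2 x) (at x)"
    and ev: "\<And>x. F (-x) = F x"
    and sum: "x1 + x2 + x3 + x4 = 0"
  shows "\<exists>\<zeta>. \<bar>\<zeta>\<bar> \<le> \<bar>x1+x2\<bar> + \<bar>x2+x3\<bar> + \<bar>x2\<bar> \<and>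
     F x1 - F x2 + F x3 - F x4 = - ((x1+x2)*(x2+x3)*F2 \<zeta>)"
proof -
  define u where "u = x1 + x2"
  define v where "v = x2 + x3"
  define b where "b = x2"
  define h where "h t = F (t - b) - F b + F (v - b) - F (t + v - b)" for t
  define h' where "h' t = F1 (t - b) - F1 (t + v - b)" for t
  have dh: "\<And>t. (h has_real_derivative h' t) (at t)"
    unfolding h_def h'_def
    by (auto intro!: derivative_eq_intros d1[THEN DERIV_chain2])
  obtain z1 where z1: "min 0 u \<le> z1" "z1 \<le> max 0 u" "h u - h 0 = (u - 0) * h' z1"
    using mvt_sym[OF dh, of 0 u] by blast
  have h0: "h 0 = 0" unfolding h_def using ev[of b] by simp
  have hu: "h u = F x1 - F x2 + F x3 - F x4"
  proof -
    have "u + v - b = - x4" using sum unfolding u_def v_def b_def by simp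
    then show ?thesis unfolding h_def using ev[of x4] by (simp add: u_def v_def b_def)
  qed
  obtain z where z: "min (z1 + v - b) (z1 - b) \<le> z" "z \<le> max (z1 + v - b) (z1 - b)"
    "F1 (z1 - b) - F1 (z1 + v - b) = ((z1 - b) - (z1 + v - b)) * F2 z"
    using mvt_sym[OF d2, of "z1 + v - b" "z1 - b"] by blast
  have "\<bar>z\<bar> \<le> \<bar>u\<bar> + \<bar>v\<bar> + \<bar>b\<bar>" using z(1,2) z1(1,2) by (auto simp: min_def max_def split: if_splits)
  moreover have "F x1 - F x2 + F x3 - F x4 = - (u * v * F2 z)"
  proof -
    have "F x1 - F x2 + F x3 - F x4 = u * (F1 (z1 - b) - F1 (z1 + v - b))"
      using z1(3) h0 hu unfolding h'_def by simp
    also have "\<dots> = u * (((z1 - b) - (z1 + v - b)) * F2 z)" unfolding z(3) ..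
    also have "\<dots> = - (u * v * F2 z)" by (simp add: algebra_simps)
    finally show ?thesis .
  qed
  ultimately show ?thesis unfolding u_def v_def b_def by blast
qed

lemma theta_ge1:
  fixes \<theta>0 :: "real \<Rightarrow> real"
  assumes th_even: "\<forall>x. \<theta>0 (- x) = \<theta>0 x"
    and th_mono: "mono_on {0..} \<theta>0"
    and th_small: "\<forall>x. \<bar>x\<bar> \<le> 1 \<longrightarrow> \<theta>0 x = 1"
  shows "\<theta>0 x \<ge> 1"
proof -
  have "\<theta>0 0 \<le> \<theta>0 \<bar>x\<bar>" by (rule mono_onD[OF th_mono]) auto
  moreover have "\<theta>0 \<bar>x\<bar> = \<theta>0 x" using th_even[rule_format, of x] by (cases "x \<ge> 0") auto
  ultimately show ?thesis using th_small by auto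
qed

lemma theta_12:
  fixes \<theta>0 :: "real \<Rightarrow> real"
  assumes th_even: "\<forall>x. \<theta>0 (- x) = \<theta>0 x"
    and th_mono: "mono_on {0..} \<theta>0"
    and th_large: "\<forall>x. \<bar>x\<bar> \<ge> 2 \<longrightarrow> \<theta>0 x = \<bar>x\<bar> powr s"
    and th_small: "\<forall>x. \<bar>x\<bar> \<le> 1 \<longrightarrow> \<theta>0 x = 1"
    and s: "s \<ge> 1" and y: "y \<ge> 0"
  shows "\<theta>0 (12 * y) \<le> 24 powr s * \<theta>0 y"
proof (cases "y \<ge> 2")
  case True
  then have "\<theta>0 (12 * y) = (12 * y) powr s" "\<theta>0 y = y powr s" using th_large by auto
  moreover have "(12 * y) powr s = 12 powr s * y powr s" using y by (simp add: powr_mult)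
  moreover have "12 powr s \<le> 24 powr s" using s by (intro powr_mono2) auto
  ultimately show ?thesis using True by (simp add: mult_right_mono)
next
  case False
  then have "\<theta>0 (12 * y) \<le> \<theta>0 24" using y by (intro mono_onD[OF th_mono]) auto
  also have "\<theta>0 24 = 24 powr s" using th_large by auto
  also have "\<dots> \<le> 24 powr s * \<theta>0 y" using theta_ge1[OF th_even th_mono th_small, of y] by simp
  finally show ?thesis .
qed

lemma P_bound:
  fixes \<theta>0 :: "real \<Rightarrow> real"
  assumes th_even: "\<forall>x. \<theta>0 (- x) = \<theta>0 x"
    and th_mono: "mono_on {0..} \<theta>0"
    and th_large: "\<forall>x. \<bar>x\<bar> \<ge> 2 \<longrightarrow> \<theta>0 x = \<bar>x\<bar> powr s"
    and th_small: "\<forall>x. \<bar>x\<bar> \<le> 1 \<longrightarrow> \<theta>0 x = 1"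
    and s: "s \<ge> 1" and r: "r > 0"
  shows "r^2 * (1 + (10*r) powr (2 * s-2)) \<le> (4*(1 + 20 powr (2 * s-2)) + 10 powr (2 * s-2) + 1) * \<theta>0 r ^ 2"
proof -
  have g1: "\<theta>0 r ^ 2 \<ge> 1" using theta_ge1[OF th_even th_mono th_small, of r] by (simp add: one_le_power)
  have pos: "0 \<le> 20 powr (2 * s-2)" "0 \<le> 10 powr (2 * s-2)" by auto
  show ?thesis
  proof (cases "r \<le> 2")
    case True
    have h1: "(10*r) powr (2 * s-2) \<le> 20 powr (2 * s-2)" by (rule powr_mono2) (use True r s in auto)
    have h2: "r^2 \<le> 4"
    proof -
      have "r^2 \<le> 2^2" using True r by (intro power_mono) auto
      then show ?thesis by simp
    qed
    have "r^2 * (1 + (10*r) powr (2 * s-2)) \<le> 4 * (1 + 20 powr (2 * s-2))"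
      by (rule mult_mono[OF h2 add_left_mono[OF h1]]) auto
    also have "\<dots> \<le> (4*(1 + 20 powr (2 * s-2)) + 10 powr (2 * s-2) + 1) * 1" using pos by simp
    also have "\<dots> \<le> (4*(1 + 20 powr (2 * s-2)) + 10 powr (2 * s-2) + 1) * \<theta>0 r ^ 2"
      by (rule mult_left_mono[OF g1]) (use pos in auto)
    finally show ?thesis .
  next
    case False
    then have "\<theta>0 r = r powr s" using th_large r by auto
    then have th: "\<theta>0 r ^ 2 = r powr (2 * s)"
    proof -
      assume e: "\<theta>0 r = r powr s"
      have "\<theta>0 r ^ 2 = r powr s * r powr s" unfolding e power2_eq_square ..
      also have "\<dots> = r powr (s + s)" by (rule powr_add[symmetric])
      also have "s + s = 2 * s" by simp
      finally show ?thesis .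
    qed
    have r2: "r^2 = r powr 2" using r by (simp add: powr_numeral)
    have a: "r^2 \<le> r powr (2 * s)" unfolding r2 by (rule powr_mono) (use False s in auto)
    have b: "r^2 * (10*r) powr (2 * s-2) = 10 powr (2 * s-2) * r powr (2 * s)"
    proof -
      have "r powr 2 * (10*r) powr (2 * s-2) = r powr 2 * (10 powr (2 * s-2) * r powr (2 * s-2))"
        using r by (simp add: powr_mult)
      also have "\<dots> = 10 powr (2 * s-2) * (r powr 2 * r powr (2 * s-2))" by (simp add: algebra_simps)
      also have "r powr 2 * r powr (2 * s-2) = r powr (2 * s)" by (simp add: powr_add[symmetric])
      finally show ?thesis unfolding r2 .
    qed
    have "r^2 * (1 + (10*r) powr (2 * s-2)) = r^2 + 10 powr (2 * s-2) * r powr (2 * s)"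
      using b by (simp add: distrib_left)
    also have "\<dots> \<le> (1 + 10 powr (2 * s-2)) * r powr (2 * s)" using a by (simp add: distrib_right)
    also have "\<dots> \<le> (4*(1 + 20 powr (2 * s-2)) + 10 powr (2 * s-2) + 1) * r powr (2 * s)"
      by (rule mult_right_mono) (use pos in auto)
    finally show ?thesis unfolding th .
  qed
qed

lemma sq_powr: "(x::real) > 0 \<Longrightarrow> (x powr s) ^ 2 = x powr (2 * s)"
proof -
  assume "x > 0"
  have "(x powr s) ^ 2 = x powr s * x powr s" unfolding power2_eq_square ..
  also have "\<dots> = x powr (s + s)" by (rule powr_add[symmetric])
  also have "s + s = 2 * s" by simp
  finally show ?thesis .
qed

lemma F2_bound:
  fixes \<theta>0 :: "real \<Rightarrow> real"
  assumes smooth: "\<forall>k x. ((deriv ^^ k) \<theta>0) differentiable (at x)"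
    and th_large: "\<forall>x. \<bar>x\<bar> \<ge> 2 \<longrightarrow> \<theta>0 x = \<bar>x\<bar> powr s"
    and s: "s \<ge> 1"
  defines "F \<equiv> \<lambda>x. \<theta>0 x ^ 2"
    and "F1 \<equiv> \<lambda>x. 2 * \<theta>0 x * deriv \<theta>0 x"
    and "F2 \<equiv> \<lambda>x. 2 * (deriv \<theta>0 x * deriv \<theta>0 x + \<theta>0 x * deriv (deriv \<theta>0) x)"
  shows "(\<forall>x. (F has_real_derivative F1 x) (at x)) \<and> (\<forall>x. (F1 has_real_derivative F2 x) (at x))
     \<and> (\<exists>K>0. \<forall>y. \<bar>F2 y\<bar> \<le> K * (1 + \<bar>y\<bar> powr (2 * s - 2)))"
proof -
  note sd = smooth_derivs[OF smooth]
  have dF: "\<And>x. (F has_real_derivative F1 x) (at x)"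
    unfolding F_def F1_def by (auto intro!: derivative_eq_intros sd(1))
  have dF1: "\<And>x. (F1 has_real_derivative F2 x) (at x)"
    unfolding F1_def F2_def by (auto intro!: derivative_eq_intros sd(1) sd(2) simp: algebra_simps)
  have c0: "\<And>x. isCont \<theta>0 x" using sd(1) DERIV_isCont by blast
  have c1: "\<And>x. isCont (deriv \<theta>0) x" using sd(2) DERIV_isCont by blast
  have cF2: "continuous_on {-2..2} F2"
    unfolding F2_def by (intro continuous_at_imp_continuous_on ballI) (auto intro!: continuous_intros c0 c1 sd(3))
  have "bounded (F2 ` {-2..2})"
    by (rule compact_imp_bounded[OF compact_continuous_image[OF cF2 compact_Icc]])
  then obtain K0 where K0: "\<forall>y\<in>{-2..2}. \<bar>F2 y\<bar> \<le> K0"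
    unfolding bounded_iff by auto
  have pos: "\<And>y. y > 2 \<Longrightarrow> F2 y = (2 * s) * (2 * s - 1) * y powr (2 * s - 2)"
    by (rule pos_large_deriv[OF dF dF1]) (use th_large sq_powr in \<open>auto simp: F_def\<close>)
  have neg: "\<And>y. y < -2 \<Longrightarrow> F2 y = (2 * s) * (2 * s - 1) * (-y) powr (2 * s - 2)"
    by (rule neg_large_deriv[OF dF dF1]) (use th_large sq_powr in \<open>auto simp: F_def\<close>)
  define K where "K = \<bar>K0\<bar> + (2 * s) * (2 * s - 1) + 1"
  have Kpos: "K > 0" unfolding K_def using s by (smt (verit) mult_nonneg_nonneg)
  have "\<bar>F2 y\<bar> \<le> K * (1 + \<bar>y\<bar> powr (2 * s - 2))" for y
  proof -
    have p0: "0 \<le> \<bar>y\<bar> powr (2 * s - 2)" by simp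
    have k1: "0 \<le> (2 * s) * (2 * s - 1)" using s by simp
    show ?thesis
    proof (cases "y \<in> {-2..2}")
      case True
      then have "\<bar>F2 y\<bar> \<le> K0" using K0 by blast
      then have "\<bar>F2 y\<bar> \<le> K * 1" unfolding K_def using k1 by (simp only: mult_1_right)
      also have "\<dots> \<le> K * (1 + \<bar>y\<bar> powr (2 * s - 2))" using Kpos p0 by (intro mult_left_mono) auto
      finally show ?thesis .
    next
      case False
      then have "\<bar>F2 y\<bar> = (2 * s) * (2 * s - 1) * \<bar>y\<bar> powr (2 * s - 2)"
        using pos[of y] neg[of y] k1 s by (cases "y > 2") (auto simp: abs_mult)
      also have "\<dots> \<le> K * \<bar>y\<bar> powr (2 * s - 2)" unfolding K_def using p0
        by (intro mult_right_mono) auto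
      also have "\<dots> \<le> K * (1 + \<bar>y\<bar> powr (2 * s - 2))" using Kpos by simp
      finally show ?thesis .
    qed
  qed
  then show ?thesis using dF dF1 Kpos by blast
qed


lemma F2_exists:
  fixes \<theta>0 :: "real \<Rightarrow> real"
  assumes smooth: "smooth_fun \<theta>0"
    and th_large: "\<forall>x. \<bar>x\<bar> \<ge> 2 \<longrightarrow> \<theta>0 x = \<bar>x\<bar> powr s"
    and s: "s \<ge> 1"
  shows "\<exists>F1 F2 K. (\<forall>x. ((\<lambda>x. \<theta>0 x ^ 2) has_real_derivative F1 x) (at x)) \<and> (\<forall>x. (F1 has_real_derivative F2 x) (at x))
     \<and> K > 0 \<and> (\<forall>y. \<bar>F2 y\<bar> \<le> K * (1 + \<bar>y\<bar> powr (2 * s - 2)))"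
proof -
  from F2_bound[OF smooth[unfolded smooth_fun_def] th_large s] obtain K where
    h1: "\<forall>x. ((\<lambda>x. \<theta>0 x ^ 2) has_real_derivative 2 * \<theta>0 x * deriv \<theta>0 x) (at x)"
    and h2: "\<forall>x. ((\<lambda>x. 2 * \<theta>0 x * deriv \<theta>0 x) has_real_derivative
         2 * (deriv \<theta>0 x * deriv \<theta>0 x + \<theta>0 x * deriv (deriv \<theta>0) x)) (at x)"
    and h3: "K > 0" and h4: "\<forall>y. \<bar>2 * (deriv \<theta>0 y * deriv \<theta>0 y + \<theta>0 y * deriv (deriv \<theta>0) y)\<bar>
              \<le> K * (1 + \<bar>y\<bar> powr (2 * s - 2))"
    by blast
  show ?thesis
    by (rule exI[of _ "\<lambda>x. 2 * \<theta>0 x * deriv \<theta>0 x"],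
        rule exI[of _ "\<lambda>x. 2 * (deriv \<theta>0 x * deriv \<theta>0 x + \<theta>0 x * deriv (deriv \<theta>0) x)"],
        rule exI[of _ K]) (use h1 h2 h3 h4 in auto)
qed

lemma sortfacts:
  fixes a b c d :: real
  defines "L \<equiv> dec_rearr [a,b,c,d]"
  shows "a \<le> L!0" "b \<le> L!0" "c \<le> L!0" "d \<le> L!0"
    "min a b \<le> L!1" "min a c \<le> L!1" "min a d \<le> L!1" "min b c \<le> L!1" "min b d \<le> L!1" "min c d \<le> L!1"
    "L!0 = a \<or> L!0 = b \<or> L!0 = c \<or> L!0 = d"
    "L!3 = a \<or> L!3 = b \<or> L!3 = c \<or> L!3 = d"
  unfolding L_def dec_rearr_def by (auto simp: min_def)

lemma dyloc_le: "dyloc x m \<Longrightarrow> m \<ge> 1 \<Longrightarrow> \<bar>x\<bar> \<le> 2 * m"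
  unfolding dyloc_def by (auto split: if_splits)

lemma twelve:
  assumes "dyloc x m" "\<bar>x\<bar> \<le> p + q + r" "p \<le> 2 * L" "q \<le> 2 * L" "r \<le> 2 * L" "1 \<le> L"
  shows "m \<le> 12 * L"
  using assms unfolding dyloc_def by (auto split: if_splits)

lemma fourier_bound: "norm (fourier V \<xi>) \<le> (LINT x|lborel. norm (V x))"
proof -
  have "norm (fourier V \<xi>) \<le> (LINT x|lborel. norm (V x * cis (- (\<xi> * x))))"
    unfolding fourier_def by (rule integral_norm_bound)
  also have "\<dots> = (LINT x|lborel. norm (V x))" by (simp add: norm_mult)
  finally show ?thesis .
qed

lemma minA: "(y::real) \<le> x \<Longrightarrow> min x y \<le> L \<Longrightarrow> y \<le> L" by (simp add: min_def split: if_splits)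
lemma minB: "(y::real) \<le> x \<Longrightarrow> min y x \<le> L \<Longrightarrow> y \<le> L" by (simp add: min_def split: if_splits)

lemma core:
  fixes \<theta>0 F1 F2 :: "real \<Rightarrow> real" and V :: "real \<Rightarrow> complex"
    and c s N K B \<xi>1 \<xi>2 \<xi>3 \<xi>4 :: real and k1 k2 k3 k4 :: nat
  assumes th_even: "\<forall>x. \<theta>0 (- x) = \<theta>0 x"
    and th_mono: "mono_on {0..} \<theta>0"
    and th_large: "\<forall>x. \<bar>x\<bar> \<ge> 2 \<longrightarrow> \<theta>0 x = \<bar>x\<bar> powr s"
    and th_small: "\<forall>x. \<bar>x\<bar> \<le> 1 \<longrightarrow> \<theta>0 x = 1"
    and s: "s \<ge> 1"
    and dF: "\<forall>x. ((\<lambda>x. \<theta>0 x ^ 2) has_real_derivative F1 x) (at x)"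
    and dF1: "\<forall>x. (F1 has_real_derivative F2 x) (at x)"
    and Kb: "\<forall>y. \<bar>F2 y\<bar> \<le> K * (1 + \<bar>y\<bar> powr (2 * s - 2))" and Kpos: "K > 0"
    and fb: "\<forall>\<xi>. norm (fourier V \<xi>) \<le> B"
    and N: "N > 1" and sum: "\<xi>1 + \<xi>2 + \<xi>3 + \<xi>4 = 0"
    and dl1: "dyloc \<xi>1 (2^k1)" and dl2: "dyloc \<xi>2 (2^k2)"
    and dl3: "dyloc \<xi>3 (2^k3)" and dl4: "dyloc \<xi>4 (2^k4)"
  defines "L \<equiv> dec_rearr [2^k1, 2^k2, 2^k3, 2^k4]"
    and "C2 \<equiv> 4*(1 + 20 powr (2 * s-2)) + 10 powr (2 * s-2) + 1"
  shows "norm (Psi c V (theta \<theta>0 N) \<xi>1 \<xi>2 \<xi>3 \<xi>4)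
      \<le> (\<bar>c\<bar> * B * K * C2 / 2 * 24 powr s) * theta \<theta>0 N (L!0) * theta \<theta>0 N (L!1) / (L!0)^2
    \<and> L!0 \<le> 12 * L!1 \<and> 1 \<le> L!3 \<and> 1 \<le> L!0 \<and> 1 \<le> L!1"
proof -
  note S = sortfacts[where a="2^k1" and b="2^k2" and c="2^k3" and d="2^k4", folded L_def]
  have ge: "\<And>k::nat. (1::real) \<le> 2^k" by (simp add: one_le_power)
  define M where "M = L!0"
  have M1: "1 \<le> M" unfolding M_def using S(1) ge[of k1] by linarith
  have b1: "\<bar>\<xi>1\<bar> \<le> 2 * 2^k1" using dyloc_le[OF dl1 ge] .
  have b2: "\<bar>\<xi>2\<bar> \<le> 2 * 2^k2" using dyloc_le[OF dl2 ge] .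
  have b3: "\<bar>\<xi>3\<bar> \<le> 2 * 2^k3" using dyloc_le[OF dl3 ge] .
  have b4: "\<bar>\<xi>4\<bar> \<le> 2 * 2^k4" using dyloc_le[OF dl4 ge] .
  have bM1: "\<bar>\<xi>1\<bar> \<le> 2 * M" using b1 S(1) unfolding M_def by linarith
  have bM2: "\<bar>\<xi>2\<bar> \<le> 2 * M" using b2 S(2) unfolding M_def by linarith
  have bM3: "\<bar>\<xi>3\<bar> \<le> 2 * M" using b3 S(3) unfolding M_def by linarith
  have bM4: "\<bar>\<xi>4\<bar> \<le> 2 * M" using b4 S(4) unfolding M_def by linarith
  have "1 \<le> min (2^k1) (2^k2::real)" using ge[of k1] ge[of k2] by simp
  then have L1: "1 \<le> L!1" using S(5) by (rule order_trans)
  have L3: "1 \<le> L!3" using S(12) ge[of k1] ge[of k2] ge[of k3] ge[of k4] by auto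
  have M12: "M \<le> 12 * L!1"
  proof -
    have e1: "\<bar>\<xi>1\<bar> \<le> \<bar>\<xi>2\<bar> + \<bar>\<xi>3\<bar> + \<bar>\<xi>4\<bar>" "\<bar>\<xi>2\<bar> \<le> \<bar>\<xi>1\<bar> + \<bar>\<xi>3\<bar> + \<bar>\<xi>4\<bar>"
      "\<bar>\<xi>3\<bar> \<le> \<bar>\<xi>1\<bar> + \<bar>\<xi>2\<bar> + \<bar>\<xi>4\<bar>" "\<bar>\<xi>4\<bar> \<le> \<bar>\<xi>1\<bar> + \<bar>\<xi>2\<bar> + \<bar>\<xi>3\<bar>"
      using sum by linarith+
    show ?thesis
      using S(11)
    proof (elim disjE)
      assume h: "L!0 = 2^k1"
      have "2^k2 \<le> L!1" "2^k3 \<le> L!1" "2^k4 \<le> L!1" using minA[OF S(2)[unfolded h] S(5)] minA[OF S(3)[unfolded h] S(6)] minA[OF S(4)[unfolded h] S(7)] by auto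
      then show ?thesis unfolding M_def h using b2 b3 b4
        by (intro twelve[OF dl1 e1(1) _ _ _ L1]) auto
    next
      assume h: "L!0 = 2^k2"
      have "2^k1 \<le> L!1" "2^k3 \<le> L!1" "2^k4 \<le> L!1" using minB[OF S(1)[unfolded h] S(5)] minA[OF S(3)[unfolded h] S(8)] minA[OF S(4)[unfolded h] S(9)] by auto
      then show ?thesis unfolding M_def h using b1 b3 b4
        by (intro twelve[OF dl2 e1(2) _ _ _ L1]) auto
    next
      assume h: "L!0 = 2^k3"
      have "2^k1 \<le> L!1" "2^k2 \<le> L!1" "2^k4 \<le> L!1" using minB[OF S(1)[unfolded h] S(6)] minB[OF S(2)[unfolded h] S(8)] minA[OF S(4)[unfolded h] S(10)] by auto
      then show ?thesis unfolding M_def h using b1 b2 b4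
        by (intro twelve[OF dl3 e1(3) _ _ _ L1]) auto
    next
      assume h: "L!0 = 2^k4"
      have "2^k1 \<le> L!1" "2^k2 \<le> L!1" "2^k3 \<le> L!1" using minB[OF S(1)[unfolded h] S(7)] minB[OF S(2)[unfolded h] S(9)] minB[OF S(3)[unfolded h] S(10)] by auto
      then show ?thesis unfolding M_def h using b1 b2 b3
        by (intro twelve[OF dl4 e1(4) _ _ _ L1]) auto
    qed
  qed
  have B0: "0 \<le> B" using fb norm_ge_zero order_trans by blast
  have C2pos: "0 < C2" unfolding C2_def by (smt (verit) powr_ge_zero)
  have tg: "\<And>x. 1 \<le> \<theta>0 x" using theta_ge1[OF th_even th_mono th_small] .
  define r where "r = M / N"
  have rpos: "r > 0" unfolding r_def using M1 N by simp
  define L1' where "L1' = L!1 / N"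
  have rL1: "r \<le> 12 * L1'" unfolding r_def L1'_def using M12 N by (simp add: divide_right_mono)
  have th_r: "\<theta>0 r \<le> 24 powr s * \<theta>0 L1'"
  proof -
    have "\<theta>0 r \<le> \<theta>0 (12 * L1')" using rL1 rpos by (intro mono_onD[OF th_mono]) auto
    also have "\<dots> \<le> 24 powr s * \<theta>0 L1'"
      by (rule theta_12[OF th_even th_mono th_large th_small s]) (use L1 N in \<open>simp add: L1'_def\<close>)
    finally show ?thesis .
  qed
  have RHS0: "0 \<le> (\<bar>c\<bar> * B * K * C2 / 2 * 24 powr s) * \<theta>0 r * \<theta>0 L1' / M^2"
    using B0 Kpos C2pos tg[of r] tg[of L1'] by simp
  have main: "norm (Psi c V (theta \<theta>0 N) \<xi>1 \<xi>2 \<xi>3 \<xi>4)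
      \<le> (\<bar>c\<bar> * B * K * C2 / 2 * 24 powr s) * \<theta>0 r * \<theta>0 L1' / M^2"
  proof (cases "\<xi>1^2 - \<xi>2^2 + \<xi>3^2 - \<xi>4^2 = 0")
    case True
    then show ?thesis using RHS0 unfolding Psi_def Let_def by simp
  next
    case False
    define u where "u = \<xi>1 + \<xi>2"
    define v where "v = \<xi>2 + \<xi>3"
    have x4: "\<xi>4 = - (\<xi>1 + \<xi>2 + \<xi>3)" using sum by linarith
    have Deq: "\<xi>1^2 - \<xi>2^2 + \<xi>3^2 - \<xi>4^2 = -2 * u * v"
      unfolding u_def v_def x4 by (simp add: power2_eq_square algebra_simps)
    have uv: "u \<noteq> 0" "v \<noteq> 0" using False Deq by auto
    have sumx: "\<xi>1/N + \<xi>2/N + \<xi>3/N + \<xi>4/N = 0" using sum by (simp add: add_divide_distrib[symmetric])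
    obtain \<zeta> where z1: "\<bar>\<zeta>\<bar> \<le> \<bar>\<xi>1/N + \<xi>2/N\<bar> + \<bar>\<xi>2/N + \<xi>3/N\<bar> + \<bar>\<xi>2/N\<bar>"
      and z2: "\<theta>0 (\<xi>1/N)^2 - \<theta>0 (\<xi>2/N)^2 + \<theta>0 (\<xi>3/N)^2 - \<theta>0 (\<xi>4/N)^2
          = - ((\<xi>1/N + \<xi>2/N) * (\<xi>2/N + \<xi>3/N) * F2 \<zeta>)"
      using num_bound[of "\<lambda>x. \<theta>0 x ^ 2" F1 F2, OF dF[rule_format] dF1[rule_format] _ sumx] th_even
      by auto
    have num: "\<theta>0 (\<xi>1/N)^2 - \<theta>0 (\<xi>2/N)^2 + \<theta>0 (\<xi>3/N)^2 - \<theta>0 (\<xi>4/N)^2 = - (u * v * F2 \<zeta>) / N^2"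
    proof -
      have e: "\<xi>1/N + \<xi>2/N = u / N" "\<xi>2/N + \<xi>3/N = v / N"
        unfolding u_def v_def by (simp_all add: add_divide_distrib)
      show ?thesis unfolding z2 e by (simp add: power2_eq_square)
    qed
    have zb: "\<bar>\<zeta>\<bar> \<le> 10 * r"
    proof -
      have a1: "\<bar>\<xi>1/N + \<xi>2/N\<bar> = \<bar>\<xi>1 + \<xi>2\<bar> / N" using N by (simp add: add_divide_distrib[symmetric])
      have a2: "\<bar>\<xi>2/N + \<xi>3/N\<bar> = \<bar>\<xi>2 + \<xi>3\<bar> / N" using N by (simp add: add_divide_distrib[symmetric])
      have a3: "\<bar>\<xi>2/N\<bar> = \<bar>\<xi>2\<bar> / N" using N by simp
      have "\<bar>\<xi>1/N + \<xi>2/N\<bar> + \<bar>\<xi>2/N + \<xi>3/N\<bar> + \<bar>\<xi>2/N\<bar> = (\<bar>\<xi>1 + \<xi>2\<bar> + \<bar>\<xi>2 + \<xi>3\<bar> + \<bar>\<xi>2\<bar>) / N"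
        unfolding a1 a2 a3 by (simp only: add_divide_distrib)
      also have "\<dots> \<le> (10 * M) / N" using bM1 bM2 bM3 N by (intro divide_right_mono) auto
      finally show ?thesis using z1 unfolding r_def by simp
    qed
    have F2b: "\<bar>F2 \<zeta>\<bar> \<le> K * (1 + (10 * r) powr (2 * s - 2))"
    proof -
      have "\<bar>\<zeta>\<bar> powr (2 * s - 2) \<le> (10 * r) powr (2 * s - 2)" by (rule powr_mono2) (use zb s in auto)
      then show ?thesis using Kb[rule_format, of \<zeta>] Kpos by (smt (verit) mult_left_mono)
    qed
    define nf where "nf = norm (fourier V (\<xi>3 + \<xi>4))"
    have nf: "0 \<le> nf" "nf \<le> B" using fb unfolding nf_def by auto
    have "norm (Psi c V (theta \<theta>0 N) \<xi>1 \<xi>2 \<xi>3 \<xi>4)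
        = \<bar>c\<bar> * \<bar>- (u * v * F2 \<zeta>) / N^2\<bar> * nf / \<bar>-2 * u * v\<bar>"
    proof -
      have P: "Psi c V (theta \<theta>0 N) \<xi>1 \<xi>2 \<xi>3 \<xi>4 = complex_of_real c
          * complex_of_real (\<theta>0 (\<xi>1/N)^2 - \<theta>0 (\<xi>2/N)^2 + \<theta>0 (\<xi>3/N)^2 - \<theta>0 (\<xi>4/N)^2)
          * fourier V (\<xi>3 + \<xi>4) / complex_of_real (\<xi>1^2 - \<xi>2^2 + \<xi>3^2 - \<xi>4^2)"
        unfolding Psi_def Let_def theta_def by (simp only: if_not_P[OF False])
      show ?thesis unfolding P num[symmetric] Deq[symmetric] nf_def
        by (simp only: norm_mult norm_divide norm_of_real real_norm_def)
    qed
    also have "\<dots> = \<bar>c\<bar> * nf * \<bar>F2 \<zeta>\<bar> / (2 * N^2)"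
      using uv N by (simp add: abs_mult field_simps)
    also have "\<dots> \<le> \<bar>c\<bar> * B * (K * (1 + (10 * r) powr (2 * s - 2))) / (2 * N^2)"
      using nf F2b by (intro divide_right_mono mult_mono mult_left_mono) auto
    also have "\<dots> = \<bar>c\<bar> * B * K / 2 * (r^2 * (1 + (10 * r) powr (2 * s - 2))) / M^2"
      unfolding r_def using N M1 by (simp add: field_simps)
    also have "\<dots> \<le> \<bar>c\<bar> * B * K / 2 * (C2 * \<theta>0 r ^ 2) / M^2"
      using P_bound[OF th_even th_mono th_large th_small s rpos] B0 Kpos unfolding C2_def
      by (intro divide_right_mono mult_left_mono) auto
    also have "\<dots> \<le> \<bar>c\<bar> * B * K / 2 * (C2 * (\<theta>0 r * (24 powr s * \<theta>0 L1'))) / M^2"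
    proof -
      have "\<theta>0 r ^ 2 \<le> \<theta>0 r * (24 powr s * \<theta>0 L1')"
        unfolding power2_eq_square using th_r tg[of r] by (intro mult_left_mono) auto
      then show ?thesis using B0 Kpos C2pos by (intro divide_right_mono mult_left_mono) auto
    qed
    also have "\<dots> = (\<bar>c\<bar> * B * K * C2 / 2 * 24 powr s) * \<theta>0 r * \<theta>0 L1' / M^2"
      by (simp add: algebra_simps)
    finally show ?thesis .
  qed
  have main': "norm (Psi c V (theta \<theta>0 N) \<xi>1 \<xi>2 \<xi>3 \<xi>4)
      \<le> (\<bar>c\<bar> * B * K * C2 / 2 * 24 powr s) * theta \<theta>0 N (L!0) * theta \<theta>0 N (L!1) / (L!0)^2"
    using main unfolding theta_def M_def r_def L1'_def .
  show ?thesis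
    using main' M12 L3 M1 L1 unfolding M_def by (intro conjI)
qed

lemma arith2:
  fixes n C0 ta tb L0 L1 L2 L3 A :: real
  assumes h: "n \<le> C0 * ta * tb / L0^2" and "0 \<le> C0" "0 \<le> ta" "0 \<le> tb" "1 \<le> L0"
    "L0 \<le> 12 * L1" "L1 \<le> A * L2" "1 \<le> L3" "1 \<le> A" "1 \<le> L1"
  shows "n \<le> (12 * A * C0) * ta * tb * L2 * L3 / L0^3"
proof -
  have AL2: "0 < A * L2" using assms(7,10) by linarith
  have L2: "0 \<le> L2" using zero_less_mult_pos[OF AL2] assms(9) by fastforce
  have "A * L2 * 1 \<le> A * L2 * L3" by (rule mult_left_mono) (use assms(8) AL2 in auto)
  then have L0b: "L0 \<le> 12 * A * L2 * L3" using assms(6,7) by linarith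
  define X where "X = C0 * ta * tb"
  have X0: "0 \<le> X" unfolding X_def using assms(2,3,4) by simp
  have L0p: "0 < L0" using assms(5) by linarith
  have "X / L0^2 = X * L0 / L0^3" using L0p by (simp add: power2_eq_square power3_eq_cube)
  also have "\<dots> \<le> X * (12 * A * L2 * L3) / L0^3"
    by (rule divide_right_mono[OF mult_left_mono[OF L0b X0]]) (use L0p in simp)
  also have "\<dots> = (12 * A * C0) * ta * tb * L2 * L3 / L0^3" unfolding X_def by (simp add: algebra_simps)
  finally show ?thesis using h unfolding X_def by linarith
qed

theorem proposition4p2:
  fixes V :: "real \<Rightarrow> complex" and \<theta>0 :: "real \<Rightarrow> real" and s c :: real
  assumes V_L1: "integrable lborel V"
    and s_ge: "s \<ge> 1"
    and th_smooth: "smooth_fun \<theta>0"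
    and th_even: "\<forall>x. \<theta>0 (- x) = \<theta>0 x"
    and th_mono: "mono_on {0..} \<theta>0"
    and th_large: "\<forall>x. \<bar>x\<bar> \<ge> 2 \<longrightarrow> \<theta>0 x = \<bar>x\<bar> powr s"
    and th_small: "\<forall>x. \<bar>x\<bar> \<le> 1 \<longrightarrow> \<theta>0 x = 1"
  shows
   "(\<exists>K\<ge>1. \<exists>C. \<forall>N \<xi>1 \<xi>2 \<xi>3 \<xi>4 (k1::nat) (k2::nat) (k3::nat) (k4::nat).
       N > 1 \<longrightarrow> \<xi>1 + \<xi>2 + \<xi>3 + \<xi>4 = 0 \<longrightarrow>
       dyloc \<xi>1 (2^k1) \<longrightarrow> dyloc \<xi>2 (2^k2) \<longrightarrow> dyloc \<xi>3 (2^k3) \<longrightarrow> dyloc \<xi>4 (2^k4) \<longrightarrow>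
       (let Ns = dec_rearr [2^k1, 2^k2, 2^k3, 2^k4]; \<theta> = theta \<theta>0 N in
        Ns ! 1 \<ge> K * Ns ! 2 \<longrightarrow>
        norm (Psi c V \<theta> \<xi>1 \<xi>2 \<xi>3 \<xi>4) \<le> C * \<theta> (Ns ! 0) * \<theta> (Ns ! 1) / (Ns ! 0)^2))
  \<and> (\<forall>A\<ge>1. \<exists>C. \<forall>N \<xi>1 \<xi>2 \<xi>3 \<xi>4 (k1::nat) (k2::nat) (k3::nat) (k4::nat).
       N > 1 \<longrightarrow> \<xi>1 + \<xi>2 + \<xi>3 + \<xi>4 = 0 \<longrightarrow>
       dyloc \<xi>1 (2^k1) \<longrightarrow> dyloc \<xi>2 (2^k2) \<longrightarrow> dyloc \<xi>3 (2^k3) \<longrightarrow> dyloc \<xi>4 (2^k4) \<longrightarrow>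
       (let Ns = dec_rearr [2^k1, 2^k2, 2^k3, 2^k4]; \<theta> = theta \<theta>0 N in
        Ns ! 1 \<le> A * Ns ! 2 \<longrightarrow>
        norm (Psi c V \<theta> \<xi>1 \<xi>2 \<xi>3 \<xi>4)
          \<le> C * \<theta> (Ns ! 0) * \<theta> (Ns ! 1) * Ns ! 2 * Ns ! 3 / (Ns ! 0)^3))"
proof -
  obtain F1 F2 K where dF: "\<forall>x. ((\<lambda>x. \<theta>0 x ^ 2) has_real_derivative F1 x) (at x)"
    and dF1: "\<forall>x. (F1 has_real_derivative F2 x) (at x)" and Kpos: "K > 0"
    and Kb: "\<forall>y. \<bar>F2 y\<bar> \<le> K * (1 + \<bar>y\<bar> powr (2 * s - 2))"
    using F2_exists[OF th_smooth th_large s_ge] by blast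
  define B where "B = (LINT x|lborel. norm (V x))"
  have fb: "\<forall>\<xi>. norm (fourier V \<xi>) \<le> B" unfolding B_def using fourier_bound by blast
  have B0: "0 \<le> B" using fb norm_ge_zero order_trans by blast
  define C2 where "C2 = 4*(1 + 20 powr (2 * s-2)) + 10 powr (2 * s-2) + 1"
  define C0 where "C0 = \<bar>c\<bar> * B * K * C2 / 2 * 24 powr s"
  have C0: "0 \<le> C0" unfolding C0_def C2_def using B0 Kpos by simp
  have cr: "\<And>N \<xi>1 \<xi>2 \<xi>3 \<xi>4 (k1::nat) (k2::nat) (k3::nat) (k4::nat).
     N > 1 \<Longrightarrow> \<xi>1 + \<xi>2 + \<xi>3 + \<xi>4 = 0 \<Longrightarrow>
     dyloc \<xi>1 (2^k1) \<Longrightarrow> dyloc \<xi>2 (2^k2) \<Longrightarrow> dyloc \<xi>3 (2^k3) \<Longrightarrow> dyloc \<xi>4 (2^k4) \<Longrightarrow>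
     norm (Psi c V (theta \<theta>0 N) \<xi>1 \<xi>2 \<xi>3 \<xi>4)
      \<le> C0 * theta \<theta>0 N (dec_rearr [2^k1, 2^k2, 2^k3, 2^k4] ! 0)
          * theta \<theta>0 N (dec_rearr [2^k1, 2^k2, 2^k3, 2^k4] ! 1) / (dec_rearr [2^k1, 2^k2, 2^k3, 2^k4] ! 0)^2
    \<and> dec_rearr [2^k1, 2^k2, 2^k3, 2^k4] ! 0 \<le> 12 * dec_rearr [2^k1, 2^k2, 2^k3, 2^k4] ! 1
    \<and> 1 \<le> dec_rearr [2^k1, 2^k2, 2^k3, 2^k4] ! 3 \<and> 1 \<le> (dec_rearr [2^k1, 2^k2, 2^k3, 2^k4] ! 0 :: real)
    \<and> 1 \<le> (dec_rearr [2^k1, 2^k2, 2^k3, 2^k4] ! 1 :: real)"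
    unfolding C0_def C2_def by (rule core[OF th_even th_mono th_large th_small s_ge dF dF1 Kb Kpos fb])
  have tg: "\<And>N x. 0 \<le> theta \<theta>0 N x" unfolding theta_def
    using theta_ge1[OF th_even th_mono th_small] by (smt (verit))
  show ?thesis
  proof (rule conjI)
    show "\<exists>K\<ge>1. \<exists>C. \<forall>N \<xi>1 \<xi>2 \<xi>3 \<xi>4 (k1::nat) (k2::nat) (k3::nat) (k4::nat).
       N > 1 \<longrightarrow> \<xi>1 + \<xi>2 + \<xi>3 + \<xi>4 = 0 \<longrightarrow>
       dyloc \<xi>1 (2^k1) \<longrightarrow> dyloc \<xi>2 (2^k2) \<longrightarrow> dyloc \<xi>3 (2^k3) \<longrightarrow> dyloc \<xi>4 (2^k4) \<longrightarrow>
       (let Ns = dec_rearr [2^k1, 2^k2, 2^k3, 2^k4]; \<theta> = theta \<theta>0 N in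
        Ns ! 1 \<ge> K * Ns ! 2 \<longrightarrow>
        norm (Psi c V \<theta> \<xi>1 \<xi>2 \<xi>3 \<xi>4) \<le> C * \<theta> (Ns ! 0) * \<theta> (Ns ! 1) / (Ns ! 0)^2)"
      unfolding Let_def
    proof (rule exI[of _ 1], rule conjI, simp, rule exI[of _ C0], intro allI impI)
      fix N \<xi>1 \<xi>2 \<xi>3 \<xi>4 :: real and k1 k2 k3 k4 :: nat
      assume a: "N > 1" "\<xi>1 + \<xi>2 + \<xi>3 + \<xi>4 = 0" "dyloc \<xi>1 (2^k1)" "dyloc \<xi>2 (2^k2)"
          "dyloc \<xi>3 (2^k3)" "dyloc \<xi>4 (2^k4)"
      note c = cr[OF a]
      show "norm (Psi c V (theta \<theta>0 N) \<xi>1 \<xi>2 \<xi>3 \<xi>4)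
          \<le> C0 * theta \<theta>0 N (dec_rearr [2^k1, 2^k2, 2^k3, 2^k4] ! 0)
             * theta \<theta>0 N (dec_rearr [2^k1, 2^k2, 2^k3, 2^k4] ! 1)
             / (dec_rearr [2^k1, 2^k2, 2^k3, 2^k4] ! 0)^2"
        by (rule conjunct1[OF c])
    qed
  next
    show "\<forall>A\<ge>1. \<exists>C. \<forall>N \<xi>1 \<xi>2 \<xi>3 \<xi>4 (k1::nat) (k2::nat) (k3::nat) (k4::nat).
       N > 1 \<longrightarrow> \<xi>1 + \<xi>2 + \<xi>3 + \<xi>4 = 0 \<longrightarrow>
       dyloc \<xi>1 (2^k1) \<longrightarrow> dyloc \<xi>2 (2^k2) \<longrightarrow> dyloc \<xi>3 (2^k3) \<longrightarrow> dyloc \<xi>4 (2^k4) \<longrightarrow>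
       (let Ns = dec_rearr [2^k1, 2^k2, 2^k3, 2^k4]; \<theta> = theta \<theta>0 N in
        Ns ! 1 \<le> A * Ns ! 2 \<longrightarrow>
        norm (Psi c V \<theta> \<xi>1 \<xi>2 \<xi>3 \<xi>4)
          \<le> C * \<theta> (Ns ! 0) * \<theta> (Ns ! 1) * Ns ! 2 * Ns ! 3 / (Ns ! 0)^3)"
      unfolding Let_def
    proof (intro allI impI)
      fix A :: real assume A: "1 \<le> A"
      show "\<exists>C. \<forall>N \<xi>1 \<xi>2 \<xi>3 \<xi>4 (k1::nat) (k2::nat) (k3::nat) (k4::nat).
       N > 1 \<longrightarrow> \<xi>1 + \<xi>2 + \<xi>3 + \<xi>4 = 0 \<longrightarrow>
       dyloc \<xi>1 (2^k1) \<longrightarrow> dyloc \<xi>2 (2^k2) \<longrightarrow> dyloc \<xi>3 (2^k3) \<longrightarrow> dyloc \<xi>4 (2^k4) \<longrightarrow>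
        dec_rearr [2^k1, 2^k2, 2^k3, 2^k4] ! 1 \<le> A * dec_rearr [2^k1, 2^k2, 2^k3, 2^k4] ! 2 \<longrightarrow>
        norm (Psi c V (theta \<theta>0 N) \<xi>1 \<xi>2 \<xi>3 \<xi>4)
          \<le> C * theta \<theta>0 N (dec_rearr [2^k1, 2^k2, 2^k3, 2^k4] ! 0)
             * theta \<theta>0 N (dec_rearr [2^k1, 2^k2, 2^k3, 2^k4] ! 1)
             * dec_rearr [2^k1, 2^k2, 2^k3, 2^k4] ! 2 * dec_rearr [2^k1, 2^k2, 2^k3, 2^k4] ! 3
             / (dec_rearr [2^k1, 2^k2, 2^k3, 2^k4] ! 0)^3"
      proof (rule exI[of _ "12 * A * C0"], intro allI impI)
        fix N \<xi>1 \<xi>2 \<xi>3 \<xi>4 :: real and k1 k2 k3 k4 :: nat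
        assume a: "N > 1" "\<xi>1 + \<xi>2 + \<xi>3 + \<xi>4 = 0" "dyloc \<xi>1 (2^k1)" "dyloc \<xi>2 (2^k2)"
          "dyloc \<xi>3 (2^k3)" "dyloc \<xi>4 (2^k4)"
          and h: "dec_rearr [2^k1, 2^k2, 2^k3, 2^k4] ! 1 \<le> A * dec_rearr [2^k1, 2^k2, 2^k3, 2^k4] ! 2"
        note c = cr[OF a]
        have L1: "1 \<le> dec_rearr [2^k1, 2^k2, 2^k3, 2^k4] ! 1" using conjunct2[OF c] by blast
        show "norm (Psi c V (theta \<theta>0 N) \<xi>1 \<xi>2 \<xi>3 \<xi>4)
          \<le> (12 * A * C0) * theta \<theta>0 N (dec_rearr [2^k1, 2^k2, 2^k3, 2^k4] ! 0)
             * theta \<theta>0 N (dec_rearr [2^k1, 2^k2, 2^k3, 2^k4] ! 1)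
             * dec_rearr [2^k1, 2^k2, 2^k3, 2^k4] ! 2 * dec_rearr [2^k1, 2^k2, 2^k3, 2^k4] ! 3
             / (dec_rearr [2^k1, 2^k2, 2^k3, 2^k4] ! 0)^3"
        proof -
          have c1: "norm (Psi c V (theta \<theta>0 N) \<xi>1 \<xi>2 \<xi>3 \<xi>4)
            \<le> C0 * theta \<theta>0 N (dec_rearr [2^k1, 2^k2, 2^k3, 2^k4] ! 0)
             * theta \<theta>0 N (dec_rearr [2^k1, 2^k2, 2^k3, 2^k4] ! 1)
             / (dec_rearr [2^k1, 2^k2, 2^k3, 2^k4] ! 0)^2" by (rule conjunct1[OF c])
          have c2: "dec_rearr [2^k1, 2^k2, 2^k3, 2^k4] ! 0 \<le> 12 * dec_rearr [2^k1, 2^k2, 2^k3, 2^k4] ! 1"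
            "1 \<le> dec_rearr [2^k1, 2^k2, 2^k3, 2^k4] ! 3" "1 \<le> (dec_rearr [2^k1, 2^k2, 2^k3, 2^k4] ! 0 :: real)"
            using conjunct2[OF c] by blast+
          show ?thesis by (rule arith2[OF c1 C0 tg tg c2(3) c2(1) h c2(2) A L1])
        qed
      qed
    qed
  qed
qed

end
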